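(* Let $\mathsf{k}$ be algebraically closed and $\mathsf{P}=(p_{abc})\in\mathsf{k}^8$. The quadratic Jordan algebra $J_{\mathsf{P}}$ defined below is nondegenerate if and only if $D_{\mathscr{H}}(\mathsf{P})\neq0$, where $D_{\mathscr{H}}(\mathsf{P})=p_{111}^2p_{222}^2+p_{112}^2p_{221}^2+p_{121}^2p_{212}^2+p_{122}^2p_{211}^2-2(p_{111}p_{122}p_{211}p_{222}+p_{111}p_{121}p_{212}p_{222}+p_{111}p_{112}p_{221}p_{222}+p_{121}p_{122}p_{211}p_{212}+p_{112}p_{122}p_{211}p_{221}+p_{112}p_{121}p_{212}p_{221})+4(p_{111}p_{122}p_{212}p_{221}+p_{112}p_{121}p_{211}p_{222})$ (Cayley's hyperdeterminant).
   Context: Let $J=\mathsf{k}^9$ with coordinates $u_1,u_2,u_3,x_{ij}$ ($i\in\{1,2\},j\in\{1,2,3\}$); write $\bm{x}_j=(x_{1j},x_{2j})^t$. With the fixed constants $p_{abc}$, put $D^{(1)}_{ij}(x)=p_{1ij}x_{21}-p_{2ij}x_{11}$, $D^{(2)}_{ij}(x)=p_{i1j}x_{22}-p_{i2j}x_{12}$, $D^{(3)}_{ij}(x)=p_{ij1}x_{23}-p_{ij2}x_{13}$ and $D^{(k)}(x)$ the matrix with rows $(-D^{(k)}_{12}(x),D^{(k)}_{11}(x))$, $(-D^{(k)}_{22}(x),D^{(k)}_{21}(x))$; $M^\dagger$ denotes adjugate. Define $\sigma\mapsto\sigma^\sharp$ by $\bm{x}_1^\sharp=-u_1\bm{x}_1+D^{(3)}(x)\bm{x}_2$,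 $\bm{x}_2^\sharp=-u_2\bm{x}_2+D^{(1)}(x)\bm{x}_3$, $\bm{x}_3^\sharp=-u_3\bm{x}_3-D^{(2)}(x)^\dagger\bm{x}_1$, $u_1^\sharp=u_2u_3+\det D^{(1)}(x)$, $u_2^\sharp=u_3u_1+\det D^{(2)}(x)$, $u_3^\sharp=u_1u_2+\det D^{(3)}(x)$. Let $D^{(k)}_{ij}(x^\sharp)$ be $D^{(k)}_{ij}$ evaluated at the coordinates $x^\sharp_{ij}$ of $\sigma^\sharp$, $D^{(k)}(x,x^\sharp)$ the matrix with rows $(-D^{(k)}_{12}(x),D^{(k)}_{11}(x^\sharp))$, $(-D^{(k)}_{22}(x),D^{(k)}_{21}(x^\sharp))$ and $D^{(k)}(x^\sharp,x)$ the matrix with rows $(-D^{(k)}_{12}(x^\sharp),D^{(k)}_{11}(x))$, $(-D^{(k)}_{22}(x^\sharp),D^{(k)}_{21}(x))$. Let $N_{\mathsf{P}}=\tfrac13\sum_{k=1}^3\big(u_ku_k^\sharp-\det D^{(k)}(x,x^\sharp)-\det D^{(k)}(x^\sharp,x)\big)$ (a cubic form with integer coefficients). $J_{\mathsf{P}}$ is the quadratic Jordan algebra of the cubic form $N_{\mathsf{P}}$ with this $\sharp$-mapping and unit $\mathfrak{1}$ (the point $u_1=u_2=u_3=1$, $x_{ij}=0$): with $T(x,y):=-\partial_x\partial_yN_{\mathsf{P}}(\mathfrak{1})+\partial_xN_{\mathsf{P}}(\mathfrak{1})\partial_yN_{\mathsf{P}}(\mathfrak{1})$, $x\sharp y:=(x+y)^\sharp-x^\sharp-y^\sharp$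 and $U_xy:=T(x,y)x-x^\sharp\sharp y$. $J_{\mathsf{P}}$ is nondegenerate if $\{\sigma\in J\mid U_\sigma y=0\ \forall y\in J\}=\{0\}$. *)

theory Defs
  imports "HOL-Computational_Algebra.Polynomial"
begin

text \<open>The space J = k^9: a point is a function from the nine coordinate names to k.
  The constants P = (p_abc) are given as a function p :: nat => nat => nat => k,
  of which only the values at a,b,c in {1,2} are ever used.\<close>

datatype jc = U1 | U2 | U3 | X11 | X12 | X13 | X21 | X22 | X23

definition ucoord :: "nat \<Rightarrow> jc" where
  "ucoord k = (if k = 1 then U1 else if k = 2 then U2 else U3)"

definition Dk :: "(nat \<Rightarrow> nat \<Rightarrow> nat \<Rightarrow> 'a::comm_ring_1) \<Rightarrow> nat \<Rightarrow> (jc \<Rightarrow> 'a) \<Rightarrow> nat \<Rightarrow> nat \<Rightarrow> 'a" where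
  "Dk p k s i j =
     (if k = 1 then p 1 i j * s X21 - p 2 i j * s X11
      else if k = 2 then p i 1 j * s X22 - p i 2 j * s X12
      else p i j 1 * s X23 - p i j 2 * s X13)"

definition det2 :: "'a::comm_ring_1 \<Rightarrow> 'a \<Rightarrow> 'a \<Rightarrow> 'a \<Rightarrow> 'a" where
  "det2 a b c d = a * d - b * c"

definition detD :: "(nat \<Rightarrow> nat \<Rightarrow> nat \<Rightarrow> 'a::comm_ring_1) \<Rightarrow> nat \<Rightarrow> (jc \<Rightarrow> 'a) \<Rightarrow> 'a" where
  "detD p k s = det2 (- Dk p k s 1 2) (Dk p k s 1 1) (- Dk p k s 2 2) (Dk p k s 2 1)"

text \<open>The sharp map. For x3: the adjugate of the matrix with rows (a,b),(c,d) has rows (d,-b),(-c,a).\<close>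
definition sharp :: "(nat \<Rightarrow> nat \<Rightarrow> nat \<Rightarrow> 'a::comm_ring_1) \<Rightarrow> (jc \<Rightarrow> 'a) \<Rightarrow> (jc \<Rightarrow> 'a)" where
  "sharp p s = (\<lambda>c. case c of
      X11 \<Rightarrow> - s U1 * s X11 + ((- Dk p 3 s 1 2) * s X12 + Dk p 3 s 1 1 * s X22)
    | X21 \<Rightarrow> - s U1 * s X21 + ((- Dk p 3 s 2 2) * s X12 + Dk p 3 s 2 1 * s X22)
    | X12 \<Rightarrow> - s U2 * s X12 + ((- Dk p 1 s 1 2) * s X13 + Dk p 1 s 1 1 * s X23)
    | X22 \<Rightarrow> - s U2 * s X22 + ((- Dk p 1 s 2 2) * s X13 + Dk p 1 s 2 1 * s X23)
    | X13 \<Rightarrow> - s U3 * s X13 - (Dk p 2 s 2 1 * s X11 + (- Dk p 2 s 1 1) * s X21)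
    | X23 \<Rightarrow> - s U3 * s X23 - ((- (- Dk p 2 s 2 2)) * s X11 + (- Dk p 2 s 1 2) * s X21)
    | U1 \<Rightarrow> s U2 * s U3 + detD p 1 s
    | U2 \<Rightarrow> s U3 * s U1 + detD p 2 s
    | U3 \<Rightarrow> s U1 * s U2 + detD p 3 s)"

text \<open>Three times N_P, literally as in the definition:
  sum over k of u_k u_k^# - det D^(k)(x,x^#) - det D^(k)(x^#,x).\<close>
definition N3 :: "(nat \<Rightarrow> nat \<Rightarrow> nat \<Rightarrow> 'a::comm_ring_1) \<Rightarrow> (jc \<Rightarrow> 'a) \<Rightarrow> 'a" where
  "N3 p s = (\<Sum>k\<in>{1,2,3::nat}.
      s (ucoord k) * sharp p s (ucoord k)
      - det2 (- Dk p k s 1 2) (Dk p k (sharp p s) 1 1) (- Dk p k s 2 2) (Dk p k (sharp p s) 2 1)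
      - det2 (- Dk p k (sharp p s) 1 2) (Dk p k s 1 1) (- Dk p k (sharp p s) 2 2) (Dk p k s 2 1))"

text \<open>The cubic form N_P = N3/3, written out with its integer coefficients
  (so that it makes sense in every characteristic, including 3). See lemma NP_N3.\<close>
definition NP :: "(nat \<Rightarrow> nat \<Rightarrow> nat \<Rightarrow> 'a::comm_ring_1) \<Rightarrow> (jc \<Rightarrow> 'a) \<Rightarrow> 'a" where
  "NP p s =
    (s U1) * (s U2) * (s U3)
    - (p 2 1 2) * (p 2 2 1) * (s U1) * (s X11)^2
    + (p 2 1 1) * (p 2 2 2) * (s U1) * (s X11)^2
    - (p 1 2 2) * (p 2 2 1) * (s U2) * (s X12)^2
    - (p 1 2 2) * (p 2 1 2) * (s U3) * (s X13)^2
    + 2 * (p 1 2 2) * (p 2 1 2) * (p 2 2 1) * (s X11) * (s X12) * (s X13)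
    + (p 1 2 2) * (p 2 1 1) * (s U3) * (s X13) * (s X23)
    + (p 1 2 2) * (p 2 1 1) * (s U2) * (s X12) * (s X22)
    - (p 1 2 2) * (p 2 1 1) * (s U1) * (s X11) * (s X21)
    - (p 1 2 2) * (p 2 1 1) * (p 2 2 2) * (s X11) * (s X12) * (s X13)
    - (p 1 2 2) * (p 2 1 1) * (p 2 2 1) * (s X11) * (s X12) * (s X23)
    - (p 1 2 2) * (p 2 1 1) * (p 2 1 2) * (s X11) * (s X13) * (s X22)
    + (p 1 2 2) * (p 2 1 1)^2 * (s X11) * (s X22) * (s X23)
    + (p 1 2 2)^2 * (p 2 1 1) * (s X12) * (s X13) * (s X21)
    + (p 1 2 1) * (p 2 2 2) * (s U2) * (s X12)^2
    + (p 1 2 1) * (p 2 1 2) * (s U3) * (s X13) * (s X23)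
    - (p 1 2 1) * (p 2 1 2) * (s U2) * (s X12) * (s X22)
    + (p 1 2 1) * (p 2 1 2) * (s U1) * (s X11) * (s X21)
    - (p 1 2 1) * (p 2 1 2) * (p 2 2 2) * (s X11) * (s X12) * (s X13)
    - (p 1 2 1) * (p 2 1 2) * (p 2 2 1) * (s X11) * (s X12) * (s X23)
    + (p 1 2 1) * (p 2 1 2)^2 * (s X11) * (s X13) * (s X22)
    - (p 1 2 1) * (p 2 1 1) * (s U3) * (s X23)^2
    + 2 * (p 1 2 1) * (p 2 1 1) * (p 2 2 2) * (s X11) * (s X12) * (s X23)
    - (p 1 2 1) * (p 2 1 1) * (p 2 1 2) * (s X11) * (s X22) * (s X23)
    - (p 1 2 1) * (p 1 2 2) * (p 2 1 2) * (s X12) * (s X13) * (s X21)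
    - (p 1 2 1) * (p 1 2 2) * (p 2 1 1) * (s X12) * (s X21) * (s X23)
    + (p 1 2 1)^2 * (p 2 1 2) * (s X12) * (s X21) * (s X23)
    + (p 1 1 2) * (p 2 2 2) * (s U3) * (s X13)^2
    - (p 1 1 2) * (p 2 2 1) * (s U3) * (s X13) * (s X23)
    + (p 1 1 2) * (p 2 2 1) * (s U2) * (s X12) * (s X22)
    + (p 1 1 2) * (p 2 2 1) * (s U1) * (s X11) * (s X21)
    - (p 1 1 2) * (p 2 2 1) * (p 2 2 2) * (s X11) * (s X12) * (s X13)
    + (p 1 1 2) * (p 2 2 1)^2 * (s X11) * (s X12) * (s X23)
    - (p 1 1 2) * (p 2 1 2) * (p 2 2 1) * (s X11) * (s X13) * (s X22)
    - (p 1 1 2) * (p 2 1 1) * (s U2) * (s X22)^2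
    + 2 * (p 1 1 2) * (p 2 1 1) * (p 2 2 2) * (s X11) * (s X13) * (s X22)
    - (p 1 1 2) * (p 2 1 1) * (p 2 2 1) * (s X11) * (s X22) * (s X23)
    - (p 1 1 2) * (p 1 2 2) * (p 2 2 1) * (s X12) * (s X13) * (s X21)
    - (p 1 1 2) * (p 1 2 2) * (p 2 1 1) * (s X13) * (s X21) * (s X22)
    - (p 1 1 2) * (p 1 2 1) * (s U1) * (s X21)^2
    + 2 * (p 1 1 2) * (p 1 2 1) * (p 2 2 2) * (s X12) * (s X13) * (s X21)
    - (p 1 1 2) * (p 1 2 1) * (p 2 2 1) * (s X12) * (s X21) * (s X23)
    - (p 1 1 2) * (p 1 2 1) * (p 2 1 2) * (s X13) * (s X21) * (s X22)
    + 2 * (p 1 1 2) * (p 1 2 1) * (p 2 1 1) * (s X21) * (s X22) * (s X23)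
    + (p 1 1 2)^2 * (p 2 2 1) * (s X13) * (s X21) * (s X22)
    - (p 1 1 1) * (p 2 2 2) * (s U3) * (s X13) * (s X23)
    - (p 1 1 1) * (p 2 2 2) * (s U2) * (s X12) * (s X22)
    - (p 1 1 1) * (p 2 2 2) * (s U1) * (s X11) * (s X21)
    + (p 1 1 1) * (p 2 2 2)^2 * (s X11) * (s X12) * (s X13)
    + (p 1 1 1) * (p 2 2 1) * (s U3) * (s X23)^2
    - (p 1 1 1) * (p 2 2 1) * (p 2 2 2) * (s X11) * (s X12) * (s X23)
    + (p 1 1 1) * (p 2 1 2) * (s U2) * (s X22)^2
    - (p 1 1 1) * (p 2 1 2) * (p 2 2 2) * (s X11) * (s X13) * (s X22)
    + 2 * (p 1 1 1) * (p 2 1 2) * (p 2 2 1) * (s X11) * (s X22) * (s X23)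
    - (p 1 1 1) * (p 2 1 1) * (p 2 2 2) * (s X11) * (s X22) * (s X23)
    + (p 1 1 1) * (p 1 2 2) * (s U1) * (s X21)^2
    - (p 1 1 1) * (p 1 2 2) * (p 2 2 2) * (s X12) * (s X13) * (s X21)
    + 2 * (p 1 1 1) * (p 1 2 2) * (p 2 2 1) * (s X12) * (s X21) * (s X23)
    + 2 * (p 1 1 1) * (p 1 2 2) * (p 2 1 2) * (s X13) * (s X21) * (s X22)
    - (p 1 1 1) * (p 1 2 2) * (p 2 1 1) * (s X21) * (s X22) * (s X23)
    - (p 1 1 1) * (p 1 2 1) * (p 2 2 2) * (s X12) * (s X21) * (s X23)
    - (p 1 1 1) * (p 1 2 1) * (p 2 1 2) * (s X21) * (s X22) * (s X23)
    - (p 1 1 1) * (p 1 1 2) * (p 2 2 2) * (s X13) * (s X21) * (s X22)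
    - (p 1 1 1) * (p 1 1 2) * (p 2 2 1) * (s X21) * (s X22) * (s X23)
    + (p 1 1 1)^2 * (p 2 2 2) * (s X21) * (s X22) * (s X23)"

definition oneJ :: "jc \<Rightarrow> 'a::comm_ring_1" where
  "oneJ = (\<lambda>c. case c of U1 \<Rightarrow> 1 | U2 \<Rightarrow> 1 | U3 \<Rightarrow> 1 | _ \<Rightarrow> 0)"

text \<open>Directional derivatives of the polynomial N_P (formal, valid in any characteristic):
  the first derivative at a in direction x is the coefficient of t in N_P(a + t x);
  the mixed second derivative in directions x, y is the coefficient of s t in N_P(a + s x + t y).\<close>
definition dN1 :: "(nat \<Rightarrow> nat \<Rightarrow> nat \<Rightarrow> 'a::comm_ring_1) \<Rightarrow> (jc \<Rightarrow> 'a) \<Rightarrow> (jc \<Rightarrow> 'a) \<Rightarrow> 'a" where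
  "dN1 p a x = coeff (NP (\<lambda>i j k. [:p i j k:]) (\<lambda>c. [:a c, x c:])) 1"

definition dN2 :: "(nat \<Rightarrow> nat \<Rightarrow> nat \<Rightarrow> 'a::comm_ring_1) \<Rightarrow> (jc \<Rightarrow> 'a) \<Rightarrow> (jc \<Rightarrow> 'a) \<Rightarrow> (jc \<Rightarrow> 'a) \<Rightarrow> 'a" where
  "dN2 p a x y = coeff (coeff (NP (\<lambda>i j k. [:[:p i j k:]:]) (\<lambda>c. [:[:a c, y c:], [:x c:]:])) 1) 1"

definition Tform :: "(nat \<Rightarrow> nat \<Rightarrow> nat \<Rightarrow> 'a::comm_ring_1) \<Rightarrow> (jc \<Rightarrow> 'a) \<Rightarrow> (jc \<Rightarrow> 'a) \<Rightarrow> 'a" where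
  "Tform p x y = - dN2 p oneJ x y + dN1 p oneJ x * dN1 p oneJ y"

definition sharp_bil :: "(nat \<Rightarrow> nat \<Rightarrow> nat \<Rightarrow> 'a::comm_ring_1) \<Rightarrow> (jc \<Rightarrow> 'a) \<Rightarrow> (jc \<Rightarrow> 'a) \<Rightarrow> (jc \<Rightarrow> 'a)" where
  "sharp_bil p x y = (\<lambda>c. sharp p (\<lambda>d. x d + y d) c - sharp p x c - sharp p y c)"

definition Uop :: "(nat \<Rightarrow> nat \<Rightarrow> nat \<Rightarrow> 'a::comm_ring_1) \<Rightarrow> (jc \<Rightarrow> 'a) \<Rightarrow> (jc \<Rightarrow> 'a) \<Rightarrow> (jc \<Rightarrow> 'a)" where
  "Uop p x y = (\<lambda>c. Tform p x y * x c - sharp_bil p (sharp p x) y c)"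

definition JP_nondegenerate :: "(nat \<Rightarrow> nat \<Rightarrow> nat \<Rightarrow> 'a::comm_ring_1) \<Rightarrow> bool" where
  "JP_nondegenerate p \<longleftrightarrow> {\<sigma>. \<forall>y. Uop p \<sigma> y = (\<lambda>_. 0)} = {(\<lambda>_. 0)}"

definition hyperdet :: "(nat \<Rightarrow> nat \<Rightarrow> nat \<Rightarrow> 'a::comm_ring_1) \<Rightarrow> 'a" where
  "hyperdet p =
     (p 1 1 1)^2 * (p 2 2 2)^2 + (p 1 1 2)^2 * (p 2 2 1)^2 + (p 1 2 1)^2 * (p 2 1 2)^2 + (p 1 2 2)^2 * (p 2 1 1)^2
     - 2 * (p 1 1 1 * p 1 2 2 * p 2 1 1 * p 2 2 2 + p 1 1 1 * p 1 2 1 * p 2 1 2 * p 2 2 2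
            + p 1 1 1 * p 1 1 2 * p 2 2 1 * p 2 2 2 + p 1 2 1 * p 1 2 2 * p 2 1 1 * p 2 1 2
            + p 1 1 2 * p 1 2 2 * p 2 1 1 * p 2 2 1 + p 1 1 2 * p 1 2 1 * p 2 1 2 * p 2 2 1)
     + 4 * (p 1 1 1 * p 1 2 2 * p 2 1 2 * p 2 2 1 + p 1 1 2 * p 1 2 1 * p 2 1 1 * p 2 2 2)"

lemma NP_N3: "3 * NP p s = N3 p s"
  unfolding NP_def N3_def sharp_def detD_def det2_def Dk_def ucoord_def
  by (simp add: numeral_3_eq_3 algebra_simps power2_eq_square)

end

theory Submission
  imports Defs
begin

lemma coeff1_pderiv: "coeff f 1 = poly (pderiv f) 0"
  by (simp add: poly_0_coeff_0 coeff_pderiv)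

lemmas pderiv_simps = pderiv_add pderiv_diff pderiv_mult pderiv_minus pderiv_numeral pderiv_pCons pderiv_0
  poly_add poly_diff poly_mult poly_minus poly_pCons poly_0 poly_numeral pCons_0_0 mult_zero_left mult_zero_right
  add_0_right add_0_left poly_1 pderiv_1 mult_1_left mult_1_right

definition bil :: "'a::comm_ring_1 \<Rightarrow> 'a \<Rightarrow> 'a \<Rightarrow> 'a \<Rightarrow> 'a \<Rightarrow> 'a \<Rightarrow> 'a \<Rightarrow> 'a" where
  "bil a b c x1 x2 y1 y2 = 2*a*x1*y1 + b*(x1*y2 + x2*y1) + 2*c*x2*y2"

definition ca :: "(nat \<Rightarrow> nat \<Rightarrow> nat \<Rightarrow> 'a::comm_ring_1) \<Rightarrow> nat \<Rightarrow> 'a" where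
  "ca p k = (if k = 1 then p 2 1 2 * p 2 2 1 - p 2 1 1 * p 2 2 2
     else if k = 2 then p 1 2 2 * p 2 2 1 - p 1 2 1 * p 2 2 2
     else p 1 2 2 * p 2 1 2 - p 1 1 2 * p 2 2 2)"
definition cb :: "(nat \<Rightarrow> nat \<Rightarrow> nat \<Rightarrow> 'a::comm_ring_1) \<Rightarrow> nat \<Rightarrow> 'a" where
  "cb p k = (if k = 1 then p 1 1 1 * p 2 2 2 - p 1 1 2 * p 2 2 1 - p 1 2 1 * p 2 1 2 + p 1 2 2 * p 2 1 1
     else if k = 2 then p 1 1 1 * p 2 2 2 - p 1 1 2 * p 2 2 1 + p 1 2 1 * p 2 1 2 - p 1 2 2 * p 2 1 1
     else p 1 1 1 * p 2 2 2 + p 1 1 2 * p 2 2 1 - p 1 2 1 * p 2 1 2 - p 1 2 2 * p 2 1 1)"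
definition cc :: "(nat \<Rightarrow> nat \<Rightarrow> nat \<Rightarrow> 'a::comm_ring_1) \<Rightarrow> nat \<Rightarrow> 'a" where
  "cc p k = (if k = 1 then p 1 1 2 * p 1 2 1 - p 1 1 1 * p 1 2 2
     else if k = 2 then p 1 1 2 * p 2 1 1 - p 1 1 1 * p 2 1 2
     else p 1 2 1 * p 2 1 1 - p 1 1 1 * p 2 2 1)"

definition Tf :: "(nat \<Rightarrow> nat \<Rightarrow> nat \<Rightarrow> 'a::comm_ring_1) \<Rightarrow> (jc \<Rightarrow> 'a) \<Rightarrow> (jc \<Rightarrow> 'a) \<Rightarrow> 'a" where
  "Tf p x y = x U1 * y U1 + x U2 * y U2 + x U3 * y U3
     + bil (ca p 1) (cb p 1) (cc p 1) (x X11) (x X21) (y X11) (y X21)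
     + bil (ca p 2) (cb p 2) (cc p 2) (x X12) (x X22) (y X12) (y X22)
     + bil (ca p 3) (cb p 3) (cc p 3) (x X13) (x X23) (y X13) (y X23)"

lemma hyperdet_disc: "k \<in> {1,2,3} \<Longrightarrow> hyperdet p = cb p k ^ 2 - 4 * ca p k * cc p k"
  unfolding hyperdet_def ca_def cb_def cc_def
  by (auto simp: algebra_simps power2_eq_square)

lemma dN1_one: "dN1 p oneJ x = x U1 + x U2 + (x U3 :: 'a::idom)"
  unfolding dN1_def coeff1_pderiv NP_def oneJ_def power2_eq_square
  apply (simp only: pderiv_simps jc.case)
  by (simp add: algebra_simps)

lemma dN2_one: "dN2 p oneJ x y = (x U1 + x U2 + x U3) * (y U1 + y U2 + y U3) - Tf p x (y :: jc \<Rightarrow> 'a::idom)"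
  unfolding dN2_def coeff1_pderiv NP_def oneJ_def power2_eq_square
  apply (simp only: pderiv_simps jc.case)
  unfolding Tf_def bil_def ca_def cb_def cc_def
  by (simp add: algebra_simps)

lemma Tform_eq: "Tform p x y = Tf p x (y :: jc \<Rightarrow> 'a::idom)"
  unfolding Tform_def dN1_one dN2_one by simp

lemma quad_root:
  fixes a b c :: "'a::alg_closed_field"
  assumes "a \<noteq> 0"
  shows "\<exists>r. a*r^2 + b*r + c = 0"
proof -
  define f where "f = (\<lambda>k::nat. if k = 0 then c else if k = 1 then b else a)"
  have "\<exists>x. (\<Sum>k\<le>2. f k * x ^ k) = 0"
    by (rule alg_closed) (use assms in \<open>auto simp: f_def\<close>)
  then obtain x where "(\<Sum>k\<le>2. f k * x ^ k) = 0" by blast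
  hence "a*x^2 + b*x + c = 0"
    by (simp add: f_def eval_nat_numeral algebra_simps)
  thus ?thesis by blast
qed

lemma null_vec:
  fixes a b c :: "'a::alg_closed_field"
  assumes "b^2 - 4*a*c = 0"
  shows "\<exists>v1 v2. (v1 \<noteq> 0 \<or> v2 \<noteq> 0) \<and> 2*a*v1 + b*v2 = 0 \<and> b*v1 + 2*c*v2 = 0
     \<and> a*v1^2 + b*v1*v2 + c*v2^2 = 0"
proof (cases "a = 0")
  case True
  hence "b = 0" using assms by simp
  thus ?thesis using True by (intro exI[of _ 1] exI[of _ 0]) simp
next
  case False
  then obtain r where r: "a*r^2 + b*r + c = 0" using quad_root by blast
  have "(2*a*r + b)^2 = 4*a*(a*r^2 + b*r + c) + (b^2 - 4*a*c)"
    by (simp add: algebra_simps power2_eq_square)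
  hence h1: "2*a*r + b = 0" using r assms by simp
  have "-(b*r + 2*c) = r*(2*a*r+b) - 2*(a*r^2 + b*r + c)"
    by (simp add: algebra_simps power2_eq_square)
  hence "-(b*r + 2*c) = 0" using r h1 by (simp only: mult_zero_right diff_zero)
  hence h2: "b*r + 2*c = 0" by (metis neg_equal_0_iff_equal)
  show ?thesis using h1 h2 r by (intro exI[of _ r] exI[of _ 1]) (simp add: algebra_simps)
qed

definition ee :: "jc \<Rightarrow> jc \<Rightarrow> 'a::comm_ring_1" where
  "ee c = (\<lambda>d. if d = c then 1 else 0)"

lemma sb_U1: "sharp_bil p z (ee U1) = (\<lambda>c. case c of U2 \<Rightarrow> z U3 | U3 \<Rightarrow> z U2
   | X11 \<Rightarrow> - z X11 | X21 \<Rightarrow> - z X21 | _ \<Rightarrow> 0)"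
  by (rule ext, case_tac c) (simp_all add: sharp_bil_def sharp_def ee_def Dk_def detD_def det2_def algebra_simps)
lemma sb_U2: "sharp_bil p z (ee U2) = (\<lambda>c. case c of U1 \<Rightarrow> z U3 | U3 \<Rightarrow> z U1
   | X12 \<Rightarrow> - z X12 | X22 \<Rightarrow> - z X22 | _ \<Rightarrow> 0)"
  by (rule ext, case_tac c) (simp_all add: sharp_bil_def sharp_def ee_def Dk_def detD_def det2_def algebra_simps)
lemma sb_U3: "sharp_bil p z (ee U3) = (\<lambda>c. case c of U1 \<Rightarrow> z U2 | U2 \<Rightarrow> z U1
   | X13 \<Rightarrow> - z X13 | X23 \<Rightarrow> - z X23 | _ \<Rightarrow> 0)"
  by (rule ext, case_tac c) (simp_all add: sharp_bil_def sharp_def ee_def Dk_def detD_def det2_def algebra_simps)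

lemma sharp_0: "sharp p (\<lambda>_. 0) = (\<lambda>_. 0)"
proof
  fix c show "sharp p (\<lambda>_. 0) c = 0"
    by (cases c) (simp_all add: sharp_def Dk_def detD_def det2_def)
qed
lemma sb_0: "sharp_bil p (\<lambda>_. 0) y = (\<lambda>_. 0)"
  by (simp add: sharp_bil_def sharp_0)

lemma Tf_U1: "Tf p x (ee U1) = x U1" by (simp add: Tf_def ee_def bil_def)
lemma Tf_U2: "Tf p x (ee U2) = x U2" by (simp add: Tf_def ee_def bil_def)
lemma Tf_U3: "Tf p x (ee U3) = x U3" by (simp add: Tf_def ee_def bil_def)
lemma Tf_X11: "Tf p x (ee X11) = 2 * ca p 1 * x X11 + cb p 1 * x X21" by (simp add: Tf_def ee_def bil_def)
lemma Tf_X21: "Tf p x (ee X21) = cb p 1 * x X11 + 2 * cc p 1 * x X21" by (simp add: Tf_def ee_def bil_def)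
lemma Tf_X12: "Tf p x (ee X12) = 2 * ca p 2 * x X12 + cb p 2 * x X22" by (simp add: Tf_def ee_def bil_def)
lemma Tf_X22: "Tf p x (ee X22) = cb p 2 * x X12 + 2 * cc p 2 * x X22" by (simp add: Tf_def ee_def bil_def)
lemma Tf_X13: "Tf p x (ee X13) = 2 * ca p 3 * x X13 + cb p 3 * x X23" by (simp add: Tf_def ee_def bil_def)
lemma Tf_X23: "Tf p x (ee X23) = cb p 3 * x X13 + 2 * cc p 3 * x X23" by (simp add: Tf_def ee_def bil_def)

lemma solve2:
  fixes a b c v w :: "'a::field"
  assumes "b^2 - 4*a*c \<noteq> 0" "2*a*v + b*w = 0" "b*v + 2*c*w = 0"
  shows "v = 0 \<and> w = 0"
proof -
  have "(b^2 - 4*a*c) * v = b*(b*v + 2*c*w) - 2*c*(2*a*v + b*w)"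
    by (simp add: algebra_simps power2_eq_square)
  hence "(b^2 - 4*a*c) * v = 0" using assms by simp
  moreover have "(b^2 - 4*a*c) * w = b*(2*a*v + b*w) - 2*a*(b*v + 2*c*w)"
    by (simp add: algebra_simps power2_eq_square)
  hence "(b^2 - 4*a*c) * w = 0" using assms by simp
  ultimately show ?thesis using assms(1) by simp
qed

lemma dir1:
  fixes p :: "nat \<Rightarrow> nat \<Rightarrow> nat \<Rightarrow> 'a::field"
  assumes hd: "hyperdet p \<noteq> 0" and U: "\<forall>y. Uop p \<sigma> y = (\<lambda>_. 0)"
  shows "\<sigma> = (\<lambda>_. 0)"
proof -
  have H: "Tf p \<sigma> y * \<sigma> c - sharp_bil p (sharp p \<sigma>) y c = 0" for y c
    using fun_cong[OF spec[OF U, of y], of c] by (simp add: Uop_def Tform_eq)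
  note H1 = H[of "ee U1", unfolded Tf_U1 sb_U1] and H2 = H[of "ee U2", unfolded Tf_U2 sb_U2]
    and H3 = H[of "ee U3", unfolded Tf_U3 sb_U3]
  have u1: "\<sigma> U1 = 0" using H1[of U1] by simp
  have u2: "\<sigma> U2 = 0" using H2[of U2] by simp
  have u3: "\<sigma> U3 = 0" using H3[of U3] by simp
  have sh: "sharp p \<sigma> = (\<lambda>_. 0)"
  proof
    fix c show "sharp p \<sigma> c = 0"
      using H1[of U2] H1[of U3] H2[of U3] H1[of X11] H1[of X21] H2[of X12] H2[of X22] H3[of X13] H3[of X23]
      by (cases c) (simp_all add: u1 u2 u3)
  qed
  have H': "Tf p \<sigma> y * \<sigma> c = 0" for y c using H[of y c] by (simp add: sh sb_0)
  show ?thesis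
  proof (rule ccontr)
    assume "\<sigma> \<noteq> (\<lambda>_. 0)"
    then obtain c where c: "\<sigma> c \<noteq> 0" by auto
    have T0: "Tf p \<sigma> y = 0" for y using H'[of y c] c by simp
    have d1: "cb p 1 ^ 2 - 4 * ca p 1 * cc p 1 \<noteq> 0" using hd hyperdet_disc[of 1 p] by simp
    have d2: "cb p 2 ^ 2 - 4 * ca p 2 * cc p 2 \<noteq> 0" using hd hyperdet_disc[of 2 p] by simp
    have d3: "cb p 3 ^ 2 - 4 * ca p 3 * cc p 3 \<noteq> 0" using hd hyperdet_disc[of 3 p] by simp
    have x1: "\<sigma> X11 = 0 \<and> \<sigma> X21 = 0"
      by (rule solve2[OF d1]) (use T0[of "ee X11"] T0[of "ee X21"] in \<open>simp_all add: Tf_X11 Tf_X21\<close>)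
    have x2: "\<sigma> X12 = 0 \<and> \<sigma> X22 = 0"
      by (rule solve2[OF d2]) (use T0[of "ee X12"] T0[of "ee X22"] in \<open>simp_all add: Tf_X12 Tf_X22\<close>)
    have x3: "\<sigma> X13 = 0 \<and> \<sigma> X23 = 0"
      by (rule solve2[OF d3]) (use T0[of "ee X13"] T0[of "ee X23"] in \<open>simp_all add: Tf_X13 Tf_X23\<close>)
    show False using c x1 x2 x3 u1 u2 u3 by (cases c) simp_all
  qed
qed

lemma zero_in: "Uop p (\<lambda>_. 0) y = (\<lambda>_. (0::'a::comm_ring_1))"
  by (simp add: Uop_def sharp_0 sb_0)

lemma dir2:
  fixes p :: "nat \<Rightarrow> nat \<Rightarrow> nat \<Rightarrow> 'a::alg_closed_field"
  assumes hd: "hyperdet p = 0"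
  shows "\<exists>\<sigma>. \<sigma> \<noteq> (\<lambda>_. 0) \<and> (\<forall>y. Uop p \<sigma> y = (\<lambda>_. 0))"
proof -
  obtain v1 v2 where v: "v1 \<noteq> 0 \<or> v2 \<noteq> 0" "2*ca p 1*v1 + cb p 1*v2 = 0" "cb p 1*v1 + 2*cc p 1*v2 = 0"
     "ca p 1*v1^2 + cb p 1*v1*v2 + cc p 1*v2^2 = 0"
    using null_vec[of "cb p 1" "ca p 1" "cc p 1"] hd hyperdet_disc[of 1 p] by auto
  define \<sigma> where "\<sigma> = (\<lambda>c. if c = X11 then v1 else if c = X21 then v2 else 0)"
  have nz: "\<sigma> \<noteq> (\<lambda>_. 0)"
  proof
    assume "\<sigma> = (\<lambda>_. 0)"
    hence "\<sigma> X11 = 0" "\<sigma> X21 = 0" by simp_all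
    thus False using v(1) by (simp add: \<sigma>_def)
  qed
  have dd: "detD p 1 \<sigma> = - (ca p 1*v1^2 + cb p 1*v1*v2 + cc p 1*v2^2)"
    by (simp add: \<sigma>_def detD_def det2_def Dk_def ca_def cb_def cc_def algebra_simps power2_eq_square)
  have sh: "sharp p \<sigma> = (\<lambda>_. 0)"
  proof
    fix c show "sharp p \<sigma> c = 0"
    proof (cases c)
      case U1
      have d0: "detD p 1 \<sigma> = 0" by (simp only: dd v(4) minus_zero)
      have "sharp p \<sigma> U1 = \<sigma> U2 * \<sigma> U3 + detD p 1 \<sigma>" by (simp add: sharp_def)
      thus ?thesis using U1 d0 by (simp add: \<sigma>_def)
    qed (simp_all add: sharp_def \<sigma>_def detD_def det2_def Dk_def)
  qed
  have T0: "Tf p \<sigma> y = 0" for y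
  proof -
    have "Tf p \<sigma> y = y X11 * (2*ca p 1*v1 + cb p 1*v2) + y X21 * (cb p 1*v1 + 2*cc p 1*v2)"
      by (simp add: Tf_def bil_def \<sigma>_def algebra_simps)
    thus ?thesis using v by simp
  qed
  have "\<forall>y. Uop p \<sigma> y = (\<lambda>_. 0)"
    by (simp add: Uop_def Tform_eq T0 sh sb_0)
  thus ?thesis using nz by blast
qed

theorem corollary4p7:
  fixes p :: "nat \<Rightarrow> nat \<Rightarrow> nat \<Rightarrow> 'a::alg_closed_field"
  shows "JP_nondegenerate p \<longleftrightarrow> hyperdet p \<noteq> 0"
proof
  assume "JP_nondegenerate p"
  hence S: "{\<sigma>. \<forall>y. Uop p \<sigma> y = (\<lambda>_. 0)} = {(\<lambda>_. 0)}" by (simp add: JP_nondegenerate_def)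
  show "hyperdet p \<noteq> 0"
  proof
    assume "hyperdet p = 0"
    then obtain \<sigma> where "\<sigma> \<noteq> (\<lambda>_. 0)" "\<forall>y. Uop p \<sigma> y = (\<lambda>_. 0)" using dir2 by blast
    thus False using S by blast
  qed
next
  assume "hyperdet p \<noteq> 0"
  thus "JP_nondegenerate p"
    unfolding JP_nondegenerate_def using dir1 zero_in by blast
qed

end
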